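(* Let $G$ be a finite group of odd order and $\alpha$ an automorphism of $G$. Then $|\{g\in G:\alpha(g)=g^3\}|\leq[G:\mathrm{fix}(\alpha)]$, where $\mathrm{fix}(\alpha)=\{g\in G:\alpha(g)=g\}$. In particular, if $|\{g\in G:\alpha(g)=g^3\}|=\rho|G|$ with $\rho>0$, then $|\mathrm{fix}(\alpha)|\leq\rho^{-1}$. *)

theory Defs
  imports "HOL-Algebra.Algebra"
begin

definition fixset :: "('a, 'b) monoid_scheme \<Rightarrow> ('a \<Rightarrow> 'a) \<Rightarrow> 'a set" where
  "fixset G \<alpha> = {g \<in> carrier G. \<alpha> g = g}"

definition cubeset :: "('a, 'b) monoid_scheme \<Rightarrow> ('a \<Rightarrow> 'a) \<Rightarrow> 'a set" where
  "cubeset G \<alpha> = {g \<in> carrier G. \<alpha> g = g [^]\<^bsub>G\<^esub> (3::nat)}"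

end

theory Submission
  imports Defs
begin

lemma fix_subgroup:
  fixes G (structure)
  assumes G: "group G" and a: "\<alpha> \<in> hom G G"
  shows "subgroup (fixset G \<alpha>) G"
proof -
  interpret group G by (rule G)
  show ?thesis
  proof (rule subgroupI)
    show "fixset G \<alpha> \<subseteq> carrier G" by (auto simp: fixset_def)
    show "fixset G \<alpha> \<noteq> {}"
      using a by (auto simp: fixset_def hom_one[OF a G G] intro!: exI[of _ "\<one>"])
    fix x assume "x \<in> fixset G \<alpha>"
    then show "inv x \<in> fixset G \<alpha>"
      using a group_hom.hom_inv[of G G \<alpha>] G by (auto simp: fixset_def group_hom_def group_hom_axioms_def)
  next
    fix x y assume "x \<in> fixset G \<alpha>" "y \<in> fixset G \<alpha>"
    then show "x \<otimes> y \<in> fixset G \<alpha>"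
      using a by (auto simp: fixset_def hom_mult)
  qed
qed

lemma sq_inj:
  fixes G (structure)
  assumes G: "group G" and fin: "finite (carrier G)" and od: "odd (order G)"
    and g: "g \<in> carrier G" and h: "h \<in> carrier G"
    and eq: "g \<otimes>\<^bsub>G\<^esub> g = h \<otimes>\<^bsub>G\<^esub> h"
  shows "g = h"
proof -
  interpret group G by (rule G)
  obtain k where k: "order G = 2*k+1" using od oddE by blast
  have key: "x = (x \<otimes> x) [^] (k+1)" if x: "x \<in> carrier G" for x
  proof -
    have "x [^] order G = \<one>" using pow_order_eq_1[OF x] .
    have "(x \<otimes> x) [^] (k+1) = (x [^] (2::nat)) [^] (k+1)"
      using x by (simp add: numeral_2_eq_2)
    also have "\<dots> = x [^] (2*(k+1))" by (rule nat_pow_pow[OF x])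
    also have "\<dots> = x [^] (order G + 1)" using k by (simp add: algebra_simps)
    also have "\<dots> = x [^] order G \<otimes> x" using x
      by (simp add: nat_pow_mult[symmetric])
    also have "\<dots> = x" using x pow_order_eq_1[OF x] by simp
    finally show ?thesis by simp
  qed
  show ?thesis using key[OF g] key[OF h] eq by simp
qed

theorem mainTheorem7:
  fixes G (structure) and \<alpha> :: "'a \<Rightarrow> 'a"
  assumes "group G" and "finite (carrier G)" and "odd (order G)"
    and "\<alpha> \<in> iso G G"
  shows "card (cubeset G \<alpha>) \<le> card (rcosets (fixset G \<alpha>))
         \<and> (\<forall>\<rho>::real. \<rho> > 0 \<and> real (card (cubeset G \<alpha>)) = \<rho> * real (order G)
              \<longrightarrow> real (card (fixset G \<alpha>)) \<le> 1 / \<rho>)"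
proof -
  interpret group G by (rule assms(1))
  have a: "\<alpha> \<in> hom G G" using assms(4) by (simp add: iso_def)
  let ?F = "fixset G \<alpha>"
  have sub: "subgroup ?F G" by (rule fix_subgroup[OF assms(1) a])
  have inj: "inj_on (\<lambda>g. ?F #> g) (cubeset G \<alpha>)"
  proof (rule inj_onI)
    fix g h assume gC: "g \<in> cubeset G \<alpha>" and hC: "h \<in> cubeset G \<alpha>"
      and e: "?F #> g = ?F #> h"
    have gc: "g \<in> carrier G" and hc: "h \<in> carrier G"
      and ga: "\<alpha> g = g \<otimes> g \<otimes> g" and ha: "\<alpha> h = h \<otimes> h \<otimes> h"
      using gC hC by (auto simp: cubeset_def numeral_3_eq_3)
    have "g \<in> ?F #> g" using rcos_self[OF gc sub] .
    then obtain f where f: "f \<in> ?F" and gf: "g = f \<otimes> h"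
      using e by (auto simp: r_coset_def)
    have fc: "f \<in> carrier G" and fa: "\<alpha> f = f" using f by (auto simp: fixset_def)
    have "(f \<otimes> h) \<otimes> (g \<otimes> g) = g \<otimes> g \<otimes> g" using gf gc by (simp add: m_assoc)
    also have "\<dots> = \<alpha> f \<otimes> \<alpha> h" using ga gf a fc hc by (simp add: hom_mult)
    also have "\<dots> = (f \<otimes> h) \<otimes> (h \<otimes> h)" using fa ha fc hc by (simp add: m_assoc)
    finally have "g \<otimes> g = h \<otimes> h" using fc hc gc
      by (meson l_cancel m_closed)
    then show "g = h" using sq_inj[OF assms(1-3) gc hc] by simp
  qed
  have img: "(\<lambda>g. ?F #> g) ` cubeset G \<alpha> \<subseteq> rcosets ?F"
    by (auto simp: cubeset_def RCOSETS_def)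
  have fin_rc: "finite (rcosets ?F)"
    using assms(2) by (simp add: RCOSETS_def)
  have c1: "card (cubeset G \<alpha>) \<le> card (rcosets ?F)"
    using card_inj_on_le[OF inj img fin_rc] .
  have lag: "card (rcosets ?F) * card ?F = order G"
    using lagrange[OF sub] assms(2) by simp
  have pos: "order G > 0" using assms(3) by (cases "order G") auto
  have Fpos: "card ?F > 0" using lag pos by (cases "card ?F") auto
  show ?thesis
  proof (intro conjI allI impI c1)
    fix \<rho> :: real assume r: "\<rho> > 0 \<and> real (card (cubeset G \<alpha>)) = \<rho> * real (order G)"
    have "\<rho> * real (order G) \<le> real (card (rcosets ?F))" using r c1 by simp
    hence "\<rho> * real (order G) * real (card ?F) \<le> real (order G)"
      using lag Fpos
      by (metis mult_right_mono of_nat_0_le_iff of_nat_mult)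
    hence "\<rho> * real (card ?F) \<le> 1" using pos
      by (simp add: mult.commute mult.left_commute)
    thus "real (card ?F) \<le> 1 / \<rho>" using r by (simp add: field_simps)
  qed
qed

end
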